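(* Let $V$ be a finite-dimensional scalar product space and $T$ a self-adjoint operator on $V$. Let $\lambda$ be an eigenvalue of $T$, $U=T-\lambda I$, and suppose $x$ generates a cycle of generalized eigenvectors of length $p$ with eigenvalue $\lambda$ which is adapted to the scalar product with sign $\varepsilon$. Let $v_i=U^{p-i}x$ and $H=\operatorname{span}\{v_1,\dots,v_p\}$. For $0\le k\le p-1$ define the symmetric bilinear form $[y,w]_k=\langle U^k y,w\rangle$ on $H$. Then the number of zero entries in any diagonal representation of $[\cdot,\cdot]_k$ is $k$. If $\lambda\in\mathbb{R}$, then the number of negative entries in any diagonal representation of $[\cdot,\cdot]_k$ is $$\begin{cases}\lfloor\frac{(p-k)+1}{2}\rfloor&\text{if }\varepsilon=-1,\\ (p-k)-\lfloor\frac{(p-k)+1}{2}\rfloor&\text{if }\varepsilon=1.\end{cases}$$ In particular, the invariants of $[\cdot,\cdot]_k$ depend only on $p,k,\varepsilon$.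
   Context: A scalar product is a non-degenerate symmetric bilinear form $\langle\cdot,\cdot\rangle$ over $\mathbb{R}$ or $\mathbb{C}$ (bilinear in the complex case); if $V$ is real, non-real eigenvalues are handled in the complexification with the bilinear extension, while for real $\lambda$ the cycle lies in the real space $V$. $T$ is self-adjoint if $\langle Tx,y\rangle=\langle x,Ty\rangle$. $x$ generates a cycle of length $p$ if $p$ is minimal with $U^px=0$. The cycle is adapted to the scalar product with sign $\varepsilon$ if $v_1,\dots,v_p$ satisfy $\langle v_i,v_j\rangle=\varepsilon$ for $i+j=p+1$ and $0$ otherwise, where $\varepsilon\in\{\pm1\}$ if $\lambda\in\mathbb{R}$ and $\varepsilon=1$ if $\lambda\notin\mathbb{R}$. A diagonal representation of a symmetric bilinear form is a basis in which its matrix is diagonal. *)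

theory Defs
  imports "HOL-Analysis.Analysis"
begin

text \<open>Vectors of a finite-dimensional space over a field 'a are modelled as 'a^'n
  (every finite-dimensional space is of this form); scalar multiplication is (*s).\<close>

definition is_scalar_product :: "('a::field^'n \<Rightarrow> 'a^'n \<Rightarrow> 'a) \<Rightarrow> bool" where
  "is_scalar_product B \<longleftrightarrow>
     (\<forall>x x' y. B (x + x') y = B x y + B x' y) \<and>
     (\<forall>c x y. B (c *s x) y = c * B x y) \<and>
     (\<forall>x y. B x y = B y x) \<and>
     (\<forall>x. (\<forall>y. B x y = 0) \<longrightarrow> x = 0)"

definition self_adjoint :: "('a::field^'n \<Rightarrow> 'a^'n \<Rightarrow> 'a) \<Rightarrow> ('a^'n \<Rightarrow> 'a^'n) \<Rightarrow> bool" where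
  "self_adjoint B T \<longleftrightarrow> Vector_Spaces.linear (*s) (*s) T \<and> (\<forall>x y. B (T x) y = B x (T y))"

definition is_eigenvalue :: "('a::field^'n \<Rightarrow> 'a^'n) \<Rightarrow> 'a \<Rightarrow> bool" where
  "is_eigenvalue T lam \<longleftrightarrow> (\<exists>v. v \<noteq> 0 \<and> T v = lam *s v)"

definition shiftop :: "('a::field^'n \<Rightarrow> 'a^'n) \<Rightarrow> 'a \<Rightarrow> 'a^'n \<Rightarrow> 'a^'n" where
  "shiftop T lam = (\<lambda>v. T v - lam *s v)"

definition generates_cycle :: "('a::field^'n \<Rightarrow> 'a^'n) \<Rightarrow> 'a \<Rightarrow> 'a^'n \<Rightarrow> nat \<Rightarrow> bool" where
  "generates_cycle T lam x p \<longleftrightarrow>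
     (shiftop T lam ^^ p) x = 0 \<and> (\<forall>q<p. (shiftop T lam ^^ q) x \<noteq> 0)"

definition cycle_vec :: "('a::field^'n \<Rightarrow> 'a^'n) \<Rightarrow> 'a \<Rightarrow> 'a^'n \<Rightarrow> nat \<Rightarrow> nat \<Rightarrow> 'a^'n" where
  "cycle_vec T lam x p i = (shiftop T lam ^^ (p - i)) x"

definition cycle_adapted ::
  "('a::field^'n \<Rightarrow> 'a^'n \<Rightarrow> 'a) \<Rightarrow> ('a^'n \<Rightarrow> 'a^'n) \<Rightarrow> 'a \<Rightarrow> 'a^'n \<Rightarrow> nat \<Rightarrow> 'a \<Rightarrow> bool" where
  "cycle_adapted B T lam x p eps \<longleftrightarrow>
     (\<forall>i\<in>{1..p}. \<forall>j\<in>{1..p}.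
        B (cycle_vec T lam x p i) (cycle_vec T lam x p j) = (if i + j = p + 1 then eps else 0))"

definition cycle_span :: "('a::field^'n \<Rightarrow> 'a^'n) \<Rightarrow> 'a \<Rightarrow> 'a^'n \<Rightarrow> nat \<Rightarrow> ('a^'n) set" where
  "cycle_span T lam x p = vec.span (cycle_vec T lam x p ` {1..p})"

definition kform ::
  "('a::field^'n \<Rightarrow> 'a^'n \<Rightarrow> 'a) \<Rightarrow> ('a^'n \<Rightarrow> 'a^'n) \<Rightarrow> 'a \<Rightarrow> nat \<Rightarrow> 'a^'n \<Rightarrow> 'a^'n \<Rightarrow> 'a" where
  "kform B T lam k y w = B ((shiftop T lam ^^ k) y) w"

definition diagonal_rep :: "('a::field^'n \<Rightarrow> 'a^'n \<Rightarrow> 'a) \<Rightarrow> ('a^'n) set \<Rightarrow> ('a^'n) set \<Rightarrow> bool" where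
  "diagonal_rep F H D \<longleftrightarrow>
     vec.independent D \<and> vec.span D = H \<and> (\<forall>a\<in>D. \<forall>b\<in>D. a \<noteq> b \<longrightarrow> F a b = 0)"

definition zero_entries :: "('a::field^'n \<Rightarrow> 'a^'n \<Rightarrow> 'a) \<Rightarrow> ('a^'n) set \<Rightarrow> nat" where
  "zero_entries F D = card {d\<in>D. F d d = 0}"

definition neg_entries :: "(real^'n \<Rightarrow> real^'n \<Rightarrow> real) \<Rightarrow> (real^'n) set \<Rightarrow> nat" where
  "neg_entries F D = card {d\<in>D. F d d < 0}"

end

theory Submission
  imports Defs
begin


definition bil :: "('a::field^'n \<Rightarrow> 'a^'n \<Rightarrow> 'a) \<Rightarrow> bool" where
  "bil F \<longleftrightarrow> (\<forall>x x' y. F (x + x') y = F x y + F x' y) \<and>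
     (\<forall>c x y. F (c *s x) y = c * F x y) \<and> (\<forall>x y. F x y = F y x)"

lemma bil_add: "bil F \<Longrightarrow> F (x + x') y = F x y + F x' y"
  unfolding bil_def by blast
lemma bil_scale: "bil F \<Longrightarrow> F (c *s x) y = c * F x y"
  unfolding bil_def by blast
lemma bil_sym: "bil F \<Longrightarrow> F x y = F y x"
  unfolding bil_def by blast
lemma bil_add2: "bil F \<Longrightarrow> F y (x + x') = F y x + F y x'"
  using bil_add[of F x x' y] bil_sym[of F] by simp
lemma bil_scale2: "bil F \<Longrightarrow> F y (c *s x) = c * F y x"
  using bil_scale[of F c x y] bil_sym[of F] by simp
lemma bil_zero: "bil F \<Longrightarrow> F 0 y = 0"
  using bil_scale[of F 0 0 y] by simp
lemma bil_zero2: "bil F \<Longrightarrow> F y 0 = 0"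
  using bil_zero[of F y] bil_sym[of F] by simp
lemma bil_diff: "bil F \<Longrightarrow> F (x - x') y = F x y - F x' y"
  using bil_add[of F "x - x'" x' y] by simp
lemma bil_diff2: "bil F \<Longrightarrow> F y (x - x') = F y x - F y x'"
  using bil_diff[of F x x' y] bil_sym[of F] by simp
lemma bil_sum: "bil F \<Longrightarrow> F (\<Sum>a\<in>S. f a) y = (\<Sum>a\<in>S. F (f a) y)"
  by (induction S rule: infinite_finite_induct) (auto simp: bil_zero bil_add)
lemma bil_sum2: "bil F \<Longrightarrow> F y (\<Sum>a\<in>S. f a) = (\<Sum>a\<in>S. F y (f a))"
  using bil_sum[of F f S y] bil_sym[of F] by simp

lemma bil_neg: "bil F \<Longrightarrow> bil (\<lambda>a b. - F a b)"
  unfolding bil_def by auto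

lemma sum_test:
  assumes "bil G" "finite I" "i \<in> I" "\<forall>j\<in>I. j \<noteq> i \<longrightarrow> G (e j) w = 0"
  shows "G (\<Sum>j\<in>I. u j *s e j) w = u i * G (e i) w"
proof -
  have "G (\<Sum>j\<in>I. u j *s e j) w = (\<Sum>j\<in>I. u j * G (e j) w)"
    using assms(1) by (simp add: bil_sum bil_scale)
  also have "\<dots> = u i * G (e i) w + (\<Sum>j\<in>I-{i}. u j * G (e j) w)"
    using assms(2,3) by (simp add: sum.remove)
  also have "(\<Sum>j\<in>I-{i}. u j * G (e j) w) = 0"
    using assms(4) by (intro sum.neutral) auto
  finally show ?thesis by simp
qed

lemma span_repr:
  assumes "finite I" "inj_on e I" "y \<in> vec.span (e ` I)"
  shows "\<exists>u. y = (\<Sum>i\<in>I. u i *s e i)"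
proof -
  obtain u where "y = (\<Sum>v\<in>e ` I. u v *s v)"
    using assms vec.span_finite[of "e ` I"] by auto
  also have "\<dots> = (\<Sum>i\<in>I. u (e i) *s e i)"
    using assms(2) by (simp add: sum.reindex)
  finally show ?thesis by (rule exI[of _ "\<lambda>i. u (e i)"])
qed

lemma test_indep:
  assumes "bil G" "finite I"
    and "\<forall>i\<in>I. \<exists>w. G (e i) w \<noteq> 0 \<and> (\<forall>j\<in>I. j \<noteq> i \<longrightarrow> G (e j) w = 0)"
  shows "inj_on e I \<and> vec.independent (e ` I)"
proof
  show inj: "inj_on e I"
  proof (rule inj_onI, rule ccontr)
    fix i j assume ij: "i \<in> I" "j \<in> I" "e i = e j" "i \<noteq> j"
    then obtain w where "G (e i) w \<noteq> 0" "\<forall>j'\<in>I. j' \<noteq> i \<longrightarrow> G (e j') w = 0"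
      using assms(3) by blast
    with ij show False by auto
  qed
  show "vec.independent (e ` I)"
    unfolding vec.independent_explicit
  proof (intro conjI allI impI ballI)
    show "finite (e ` I)" using assms(2) by simp
    fix c v assume s: "(\<Sum>v\<in>e ` I. c v *s v) = 0" and v: "v \<in> e ` I"
    then obtain i where i: "i \<in> I" "v = e i" by auto
    from s have s': "(\<Sum>j\<in>I. c (e j) *s e j) = 0"
      using inj by (simp add: sum.reindex)
    obtain w where w: "G (e i) w \<noteq> 0" "\<forall>j\<in>I. j \<noteq> i \<longrightarrow> G (e j) w = 0"
      using assms(3) i by blast
    have "G (\<Sum>j\<in>I. c (e j) *s e j) w = c (e i) * G (e i) w"
      by (rule sum_test[OF assms(1,2) i(1) w(2)])
    with s' w(1) assms(1) have "c (e i) = 0" by (simp add: bil_zero)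
    then show "c v = 0" using i by simp
  qed
qed

lemma indep_Un:
  assumes "vec.independent A" "vec.independent C"
    and "\<And>y. y \<in> vec.span A \<Longrightarrow> y \<in> vec.span C \<Longrightarrow> y = 0"
  shows "vec.independent (A \<union> C) \<and> A \<inter> C = {}"
proof
  have fA: "finite A" and fC: "finite C" using assms vec.finiteI_independent by auto
  show disj: "A \<inter> C = {}"
  proof (rule ccontr)
    assume "A \<inter> C \<noteq> {}" then obtain a where "a \<in> A" "a \<in> C" by auto
    then have "a = 0" using assms(3) vec.span_base by blast
    then show False using \<open>a \<in> A\<close> assms(1) vec.dependent_zero by blast
  qed
  show "vec.independent (A \<union> C)"
    unfolding vec.independent_explicit
  proof (intro conjI allI impI ballI)
    show "finite (A \<union> C)" using fA fC by simp
    fix c v assume s: "(\<Sum>v\<in>A \<union> C. c v *s v) = 0" and v: "v \<in> A \<union> C"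
    let ?a = "\<Sum>v\<in>A. c v *s v" and ?c = "\<Sum>v\<in>C. c v *s v"
    have "?a + ?c = 0" using s fA fC disj by (simp add: sum.union_disjoint)
    then have eq: "?a = - ?c" by (simp add: eq_neg_iff_add_eq_0)
    have "?a \<in> vec.span A" by (intro vec.span_sum vec.span_scale vec.span_base)
    moreover have "?a \<in> vec.span C" unfolding eq
      by (intro vec.span_neg vec.span_sum vec.span_scale vec.span_base)
    ultimately have a0: "?a = 0" using assms(3) by blast
    then have c0: "?c = 0" using eq by simp
    show "c v = 0"
      using v a0 c0 assms(1,2) unfolding vec.independent_explicit by blast
  qed
qed


lemma rad_span:
  assumes "bil F" "finite A" "\<forall>a\<in>A. F a w = 0" "y \<in> vec.span A"
  shows "F y w = 0"
proof -
  obtain u where "y = (\<Sum>v\<in>A. u v *s v)" using assms(2,4) vec.span_finite by auto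
  then show ?thesis using assms(1,3) by (simp add: bil_sum bil_scale)
qed

lemma diag_facts:
  assumes "diagonal_rep F H D"
  shows "vec.independent D" "finite D" "vec.span D = H" "D \<subseteq> H"
    "\<And>a b. a \<in> D \<Longrightarrow> b \<in> D \<Longrightarrow> a \<noteq> b \<Longrightarrow> F a b = 0"
  using assms vec.finiteI_independent vec.span_superset unfolding diagonal_rep_def by auto

lemma quad:
  assumes "bil F" "finite S" "\<forall>a\<in>S. \<forall>b\<in>S. a \<noteq> b \<longrightarrow> F a b = 0"
  shows "F (\<Sum>a\<in>S. u a *s a) (\<Sum>b\<in>S. u b *s b) = (\<Sum>a\<in>S. u a * u a * F a a)"
proof -
  have "F (\<Sum>a\<in>S. u a *s a) (\<Sum>b\<in>S. u b *s b) = (\<Sum>a\<in>S. u a * F a (\<Sum>b\<in>S. u b *s b))"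
    using assms(1) by (simp add: bil_sum bil_scale)
  also have "\<dots> = (\<Sum>a\<in>S. u a * (u a * F a a))"
  proof (rule sum.cong[OF refl])
    fix a assume a: "a \<in> S"
    have "F a (\<Sum>b\<in>S. u b *s b) = F (\<Sum>b\<in>S. u b *s id b) a"
      using bil_sym[OF assms(1), of a "\<Sum>b\<in>S. u b *s b"] by simp
    also have "\<dots> = u a * F (id a) a"
      by (rule sum_test[OF assms(1,2) a]) (use assms(3) a in auto)
    finally show "u a * F a (\<Sum>b\<in>S. u b *s b) = u a * (u a * F a a)" by simp
  qed
  finally show ?thesis by (simp add: mult.assoc)
qed

lemma neg_bound:
  fixes F :: "real^'n \<Rightarrow> real^'n \<Rightarrow> real"
  assumes bF: "bil F" and dr: "diagonal_rep F H D" and fI: "finite I"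
    and eH: "\<forall>i\<in>I. e i \<in> H"
    and orth: "\<forall>i\<in>I. \<forall>j\<in>I. i \<noteq> j \<longrightarrow> F (e i) (e j) = 0"
    and neg: "\<forall>i\<in>I. F (e i) (e i) < 0"
  shows "card I \<le> card {d\<in>D. F d d < 0}"
proof -
  note df = diag_facts[OF dr]
  have ti: "inj_on e I \<and> vec.independent (e ` I)"
  proof (rule test_indep[OF bF fI], intro ballI)
    fix i assume i: "i \<in> I"
    show "\<exists>w. F (e i) w \<noteq> 0 \<and> (\<forall>j\<in>I. j \<noteq> i \<longrightarrow> F (e j) w = 0)"
      by (rule exI[of _ "e i"]) (use orth neg i in \<open>auto simp: less_irrefl\<close>)
  qed
  define E where "E = e ` I"
  define N where "N = {d\<in>D. F d d < 0}"
  define C where "C = D - N"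
  have fE: "finite E" unfolding E_def using fI by simp
  have cE: "card E = card I" unfolding E_def using ti by (simp add: card_image)
  have CsD: "C \<subseteq> D" unfolding C_def by auto
  have iC: "vec.independent C" by (rule vec.independent_mono[OF df(1) CsD])
  have fC: "finite C" unfolding C_def using df(2) by simp
  have NsD: "N \<subseteq> D" unfolding N_def by auto
  have cC: "card C = card D - card N"
    unfolding C_def by (rule card_Diff_subset[OF finite_subset[OF NsD df(2)] NsD])
  have orthE: "\<forall>a\<in>E. \<forall>b\<in>E. a \<noteq> b \<longrightarrow> F a b = 0" unfolding E_def using orth by auto
  have orthC: "\<forall>a\<in>C. \<forall>b\<in>C. a \<noteq> b \<longrightarrow> F a b = 0" using df(5) CsD by blast
  have negE: "\<forall>a\<in>E. F a a < 0" unfolding E_def using neg by auto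
  have posC: "\<forall>a\<in>C. F a a \<ge> 0" unfolding C_def N_def by auto
  have sE: "F y y \<le> 0 \<and> (F y y = 0 \<longrightarrow> y = 0)" if yE: "y \<in> vec.span E" for y
  proof -
    obtain u where y: "y = (\<Sum>v\<in>E. u v *s v)" using yE fE vec.span_finite by auto
    have q: "F y y = (\<Sum>a\<in>E. u a * u a * F a a)" unfolding y by (rule quad[OF bF fE orthE])
    have t: "\<forall>a\<in>E. u a * u a * F a a \<le> 0"
      using negE by (simp add: mult_nonneg_nonpos less_imp_le)
    have "F y y \<le> 0" unfolding q using t by (simp add: sum_nonpos)
    moreover have "y = 0" if F0: "F y y = 0"
    proof -
      have "(\<Sum>a\<in>E. - (u a * u a * F a a)) = 0" using F0 q by (simp add: sum_negf)
      then have z: "\<forall>a\<in>E. - (u a * u a * F a a) = 0"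
        by (subst (asm) sum_nonneg_eq_0_iff[OF fE]) (use t in auto)
      have "\<forall>a\<in>E. u a = 0"
      proof
        fix a assume a: "a \<in> E"
        have "u a * u a * F a a = 0" using z a by auto
        moreover have "F a a \<noteq> 0" using negE a by auto
        ultimately show "u a = 0" by simp
      qed
      then show "y = 0" unfolding y by simp
    qed
    ultimately show ?thesis by blast
  qed
  have sC: "F y y \<ge> 0" if yC: "y \<in> vec.span C" for y
  proof -
    obtain u where y: "y = (\<Sum>v\<in>C. u v *s v)" using yC fC vec.span_finite by auto
    have q: "F y y = (\<Sum>a\<in>C. u a * u a * F a a)" unfolding y by (rule quad[OF bF fC orthC])
    show ?thesis unfolding q using posC by (intro sum_nonneg) simp
  qed
  have un: "vec.independent (E \<union> C) \<and> E \<inter> C = {}"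
  proof (rule indep_Un)
    show "vec.independent E" unfolding E_def using ti by simp
    show "vec.independent C" by (rule iC)
    fix y assume y1: "y \<in> vec.span E" and y2: "y \<in> vec.span C"
    have "F y y \<le> 0" "F y y = 0 \<longrightarrow> y = 0" using sE[OF y1] by auto
    moreover have "F y y \<ge> 0" using sC[OF y2] .
    ultimately show "y = 0" by simp
  qed
  have "E \<union> C \<subseteq> vec.span D"
  proof -
    have "E \<subseteq> H" unfolding E_def using eH by auto
    moreover have "C \<subseteq> H" using CsD df(4) by blast
    ultimately show ?thesis using df(3) by auto
  qed
  then have "card (E \<union> C) \<le> card D" using vec.independent_span_bound[OF df(2)] un by blast
  moreover have "card (E \<union> C) = card E + card C"
    using un fE fC card_Un_disjoint by blast
  moreover have "card N \<le> card D" using NsD df(2) card_mono by blast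
  ultimately have "card I \<le> card N" using cE cC by linarith
  then show ?thesis unfolding N_def .
qed

lemma zero_lower:
  assumes bF: "bil F" and dr: "diagonal_rep F H D" and iA: "vec.independent A"
    and AH: "A \<subseteq> H" and rad: "\<forall>a\<in>A. \<forall>w\<in>H. F a w = 0"
  shows "card A \<le> card {d\<in>D. F d d = 0}"
proof -
  note df = diag_facts[OF dr]
  define Z where "Z = {d\<in>D. F d d = 0}"
  define C where "C = D - Z"
  have fA: "finite A" using iA vec.finiteI_independent by blast
  have CsD: "C \<subseteq> D" unfolding C_def by auto
  have iC: "vec.independent C" by (rule vec.independent_mono[OF df(1) CsD])
  have fC: "finite C" unfolding C_def using df(2) by simp
  have ZsD: "Z \<subseteq> D" unfolding Z_def by auto
  have Cnz: "\<forall>d\<in>C. d \<in> D \<and> F d d \<noteq> 0" unfolding C_def Z_def by auto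
  have cC: "card C = card D - card Z"
    unfolding C_def by (rule card_Diff_subset[OF finite_subset[OF ZsD df(2)] ZsD])
  have y0: "y = 0" if y1: "y \<in> vec.span A" and y2: "y \<in> vec.span C" for y
  proof -
    have radv: "F y w = 0" if "w \<in> H" for w
      by (rule rad_span[OF bF fA _ y1]) (use rad that in auto)
    obtain u where y: "y = (\<Sum>v\<in>C. u v *s v)" using y2 fC vec.span_finite by auto
    have "u d = 0" if d: "d \<in> C" for d
    proof -
      have "F (\<Sum>v\<in>C. u v *s id v) d = u d * F (id d) d"
        by (rule sum_test[OF bF fC d]) (use df(5) d Cnz in auto)
      moreover have "F y d = 0" using radv d Cnz df(4) by blast
      ultimately show ?thesis using y d Cnz by auto
    qed
    then show "y = 0" using y by simp
  qed
  have un: "vec.independent (A \<union> C) \<and> A \<inter> C = {}"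
    by (rule indep_Un[OF iA iC y0])
  have "A \<union> C \<subseteq> vec.span D" using AH Cnz df(3,4) by blast
  then have "card (A \<union> C) \<le> card D" using vec.independent_span_bound[OF df(2)] un by blast
  moreover have "card (A \<union> C) = card A + card C"
    using un fA fC card_Un_disjoint by blast
  moreover have "card Z \<le> card D" using ZsD df(2) card_mono by blast
  ultimately have "card A \<le> card Z" using cC by linarith
  then show ?thesis unfolding Z_def .
qed

lemma radZ_lemma:
  assumes bF: "bil F" and dr: "diagonal_rep F H D"
    and z: "z \<in> D" "F z z = 0" and w: "w \<in> H"
  shows "F z w = 0"
proof -
  note df = diag_facts[OF dr]
  have wD: "w \<in> vec.span D" using w df(3) by simp
  have "w \<in> range (\<lambda>u. \<Sum>v\<in>D. u v *s v)"
    using wD unfolding vec.span_finite[OF df(2)] .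
  then obtain c where wc: "w = (\<Sum>d\<in>D. c d *s d)" by blast
  have zd: "F z d = 0" if d: "d \<in> D" for d
  proof (cases "d = z")
    case True then show ?thesis using z by simp
  next
    case False then show ?thesis using df(5)[OF z(1) d] by simp
  qed
  have "F z w = (\<Sum>d\<in>D. c d * F z d)"
    unfolding wc bil_sum2[OF bF] bil_scale2[OF bF] ..
  also have "\<dots> = 0" using zd by simp
  finally show "F z w = 0" .
qed
lemma zero_upper:
  assumes bF: "bil F" and dr: "diagonal_rep F H D" and fI: "finite I"
    and eH: "\<forall>i\<in>I. e i \<in> H"
    and tst: "\<forall>i\<in>I. \<exists>w\<in>H. F (e i) w \<noteq> 0 \<and> (\<forall>j\<in>I. j \<noteq> i \<longrightarrow> F (e j) w = 0)"
  shows "card I + card {d\<in>D. F d d = 0} \<le> card D"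
proof -
  note df = diag_facts[OF dr]
  have ti: "inj_on e I \<and> vec.independent (e ` I)"
  proof (rule test_indep[OF bF fI], intro ballI)
    fix i assume i: "i \<in> I"
    then obtain w where "w \<in> H" "F (e i) w \<noteq> 0" "\<forall>j\<in>I. j \<noteq> i \<longrightarrow> F (e j) w = 0"
      using tst by blast
    then show "\<exists>w. F (e i) w \<noteq> 0 \<and> (\<forall>j\<in>I. j \<noteq> i \<longrightarrow> F (e j) w = 0)" by blast
  qed
  define E where "E = e ` I"
  define Z where "Z = {d\<in>D. F d d = 0}"
  have fE: "finite E" unfolding E_def using fI by simp
  have cE: "card E = card I" unfolding E_def using ti by (simp add: card_image)
  have ZsD: "Z \<subseteq> D" unfolding Z_def by auto
  have iZ: "vec.independent Z" by (rule vec.independent_mono[OF df(1) ZsD])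
  have fZ: "finite Z" unfolding Z_def using df(2) by simp
  have radZ: "\<forall>z\<in>Z. \<forall>w\<in>H. F z w = 0"
  proof (intro ballI)
    fix z w assume z: "z \<in> Z" and w: "w \<in> H"
    from z have "z \<in> D" "F z z = 0" unfolding Z_def by auto
    then show "F z w = 0" by (rule radZ_lemma[OF bF dr _ _ w])
  qed
  have y0: "y = 0" if y1: "y \<in> vec.span E" and y2: "y \<in> vec.span Z" for y
  proof -
    have radv: "F y w = 0" if "w \<in> H" for w
      by (rule rad_span[OF bF fZ _ y2]) (use radZ that in auto)
    obtain u where y: "y = (\<Sum>i\<in>I. u i *s e i)"
      using span_repr[OF fI, of e y] ti y1 unfolding E_def by blast
    have "u i = 0" if i: "i \<in> I" for i
    proof -
      obtain w where w: "w \<in> H" "F (e i) w \<noteq> 0" "\<forall>j\<in>I. j \<noteq> i \<longrightarrow> F (e j) w = 0"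
        using tst i by blast
      have "F (\<Sum>i\<in>I. u i *s e i) w = u i * F (e i) w"
        by (rule sum_test[OF bF fI i w(3)])
      then show ?thesis using radv[OF w(1)] y w(2) by simp
    qed
    then show "y = 0" using y by simp
  qed
  have un: "vec.independent (E \<union> Z) \<and> E \<inter> Z = {}"
  proof (rule indep_Un)
    show "vec.independent E" unfolding E_def using ti by simp
  qed (use iZ y0 in auto)
  have "E \<subseteq> H" unfolding E_def using eH by auto
  moreover have "Z \<subseteq> H" using ZsD df(4) by blast
  ultimately have "E \<union> Z \<subseteq> vec.span D" using df(3) by simp
  then have "card (E \<union> Z) \<le> card D" using vec.independent_span_bound[OF df(2)] un by blast
  moreover have "card (E \<union> Z) = card E + card Z"
    using un fE fZ card_Un_disjoint by blast
  ultimately have "card I + card Z \<le> card D" using cE by linarith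
  then show ?thesis unfolding Z_def .
qed



lemma U_lin:
  assumes "self_adjoint B T"
  shows "Vector_Spaces.linear (*s) (*s) (shiftop T lam)"
proof -
  have lT: "Vector_Spaces.linear (*s) (*s) T" using assms unfolding self_adjoint_def by blast
  have "Vector_Spaces.linear (*s) (*s) (\<lambda>v. T v - lam *s v)"
    by (rule vec.linear_compose_sub[OF lT vec.linear_compose_scale_right[OF vec.linear_ident]])
  then show ?thesis unfolding shiftop_def .
qed

lemma pow_lin:
  fixes U :: "'a::field^'n \<Rightarrow> 'a^'n"
  assumes "Vector_Spaces.linear (*s) (*s) U"
  shows "Vector_Spaces.linear (*s) (*s) (U ^^ j)"
proof (induction j)
  case 0
  have "U ^^ 0 = id" by (rule ext) simp
  then show ?case using vec.linear_id by (simp only:)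
next
  case (Suc j)
  have "U ^^ Suc j = U \<circ> U ^^ j" by (rule ext) simp
  then show ?case
    using Vector_Spaces.linear_compose[OF Suc assms] by (simp only:)
qed

lemma bil_B: "is_scalar_product B \<Longrightarrow> bil B"
  unfolding is_scalar_product_def bil_def
  apply (elim conjE)
  apply (intro conjI)
    apply assumption+
  done

lemma U_adj:
  assumes "is_scalar_product B" "self_adjoint B T"
  shows "B (shiftop T lam y) w = B y (shiftop T lam w)"
proof -
  have b: "bil B" using bil_B assms(1) .
  have "B (T y) w = B y (T w)" using assms(2) unfolding self_adjoint_def by blast
  then show ?thesis unfolding shiftop_def
    by (simp add: bil_diff[OF b] bil_diff2[OF b] bil_scale[OF b] bil_scale2[OF b])
qed

lemma pow_adj:
  assumes "is_scalar_product B" "self_adjoint B T"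
  shows "B ((shiftop T lam ^^ j) y) w = B y ((shiftop T lam ^^ j) w)"
proof (induction j arbitrary: w)
  case 0 then show ?case by simp
next
  case (Suc j)
  have "B ((shiftop T lam ^^ Suc j) y) w = B ((shiftop T lam ^^ j) y) (shiftop T lam w)"
    using U_adj[OF assms] by simp
  also have "\<dots> = B y ((shiftop T lam ^^ j) (shiftop T lam w))" by (rule Suc)
  also have "\<dots> = B y ((shiftop T lam ^^ Suc j) w)" by (simp add: funpow_swap1)
  finally show ?case .
qed

lemma bil_kform:
  assumes "is_scalar_product B" "self_adjoint B T"
  shows "bil (kform B T lam k)"
proof -
  have b: "bil B" using bil_B assms(1) .
  have l: "Vector_Spaces.linear (*s) (*s) (shiftop T lam ^^ k)"
    by (rule pow_lin[OF U_lin[OF assms(2)]])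
  show ?thesis unfolding bil_def kform_def
  proof (intro conjI allI)
    fix x x' y show "B ((shiftop T lam ^^ k) (x + x')) y =
        B ((shiftop T lam ^^ k) x) y + B ((shiftop T lam ^^ k) x') y"
      by (simp add: vec.linear_add[OF l] bil_add[OF b])
  next
    fix c x y show "B ((shiftop T lam ^^ k) (c *s x)) y = c * B ((shiftop T lam ^^ k) x) y"
      by (simp add: vec.linear_scale[OF l] bil_scale[OF b])
  next
    fix x y show "B ((shiftop T lam ^^ k) x) y = B ((shiftop T lam ^^ k) y) x"
    proof -
      have "B ((shiftop T lam ^^ k) x) y = B x ((shiftop T lam ^^ k) y)" by (rule pow_adj[OF assms])
      also have "\<dots> = B ((shiftop T lam ^^ k) y) x" by (rule bil_sym[OF b])
      finally show ?thesis .
    qed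
  qed
qed

lemma Upow_cycle:
  assumes "self_adjoint B T" "(shiftop T lam ^^ p) x = 0" "i \<le> p"
  shows "(shiftop T lam ^^ k) (cycle_vec T lam x p i) =
           (if i \<le> k then 0 else cycle_vec T lam x p (i - k))"
proof -
  let ?U = "shiftop T lam"
  have l: "\<And>j. Vector_Spaces.linear (*s) (*s) (?U ^^ j)"
    by (rule pow_lin[OF U_lin[OF assms(1)]])
  have e: "(?U ^^ k) (cycle_vec T lam x p i) = (?U ^^ (k + (p - i))) x"
    unfolding cycle_vec_def by (simp add: funpow_add)
  show ?thesis
  proof (cases "i \<le> k")
    case True
    then have "k + (p - i) = (k - i) + p" using assms(3) by simp
    then have "(?U ^^ (k + (p - i))) x = (?U ^^ (k - i)) ((?U ^^ p) x)"
      by (simp add: funpow_add)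
    also have "\<dots> = 0" using assms(2) vec.linear_0[OF l] by simp
    finally show ?thesis using e True by simp
  next
    case False
    then have "k + (p - i) = p - (i - k)" using assms(3) by simp
    then show ?thesis using e False unfolding cycle_vec_def by simp
  qed
qed

lemma F_formula:
  assumes "is_scalar_product B" "self_adjoint B T" "(shiftop T lam ^^ p) x = 0"
    "cycle_adapted B T lam x p eps" "1 \<le> i" "i \<le> p" "1 \<le> j" "j \<le> p"
  shows "kform B T lam k (cycle_vec T lam x p i) (cycle_vec T lam x p j) =
           (if i + j = p + k + 1 then eps else 0)"
proof -
  have b: "bil B" using bil_B assms(1) .
  show ?thesis
  proof (cases "i \<le> k")
    case True
    then show ?thesis unfolding kform_def
      using Upow_cycle[OF assms(2,3,6), of k] bil_zero[OF b] assms(8) by simp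
  next
    case False
    then have "kform B T lam k (cycle_vec T lam x p i) (cycle_vec T lam x p j) =
       B (cycle_vec T lam x p (i - k)) (cycle_vec T lam x p j)"
      unfolding kform_def using Upow_cycle[OF assms(2,3,6), of k] by simp
    also have "\<dots> = (if (i - k) + j = p + 1 then eps else 0)"
    proof -
      have ad: "\<forall>i\<in>{1..p}. \<forall>j\<in>{1..p}. B (cycle_vec T lam x p i) (cycle_vec T lam x p j) =
          (if i + j = p + 1 then eps else 0)"
        using assms(4) unfolding cycle_adapted_def .
      have m1: "i - k \<in> {1..p}" unfolding atLeastAtMost_iff using False assms(6) by arith
      have m2: "j \<in> {1..p}" using assms(7,8) by simp
      show ?thesis using ad m1 m2 by blast
    qed
    also have "\<dots> = (if i + j = p + k + 1 then eps else 0)"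
      using False by (intro if_cong) auto
    finally show ?thesis .
  qed
qed



lemma FV_lemma:
  assumes "is_scalar_product B" "self_adjoint B T" "(shiftop T lam ^^ p) x = 0"
    "cycle_adapted B T lam x p eps" "a \<in> {1..p}" "b \<in> {1..p}"
  shows "kform B T lam k (cycle_vec T lam x p a) (cycle_vec T lam x p b) =
           (if a + b = p + k + 1 then eps else 0)"
  using F_formula[OF assms(1-4)] assms(5,6) by auto

lemma kform0: "kform B T lam 0 = B"
  by (intro ext) (simp add: kform_def)

lemma cyc_setup:
  fixes B :: "'a::field^'n \<Rightarrow> 'a^'n \<Rightarrow> 'a"
  assumes sp: "is_scalar_product B" and sa: "self_adjoint B T"
    and Up: "(shiftop T lam ^^ p) x = 0" and e0: "eps \<noteq> 0"
    and ad: "cycle_adapted B T lam x p eps" and kp: "k < p"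
    and dr: "diagonal_rep (kform B T lam k) (cycle_span T lam x p) D"
  shows "card D = p" "card {d\<in>D. kform B T lam k d d = 0} = k"
proof -
  define V where "V = cycle_vec T lam x p"
  define F where "F = kform B T lam k"
  define H where "H = cycle_span T lam x p"
  have Hd: "H = vec.span (V ` {1..p})" unfolding H_def V_def cycle_span_def ..
  have bF: "bil F" unfolding F_def by (rule bil_kform[OF sp sa])
  have bB: "bil B" by (rule bil_B[OF sp])
  have FV: "F (V a) (V b) = (if a + b = p + k + 1 then eps else 0)"
    if "a \<in> {1..p}" "b \<in> {1..p}" for a b
    unfolding F_def V_def by (rule FV_lemma[OF sp sa Up ad that])
  have BV: "B (V a) (V b) = (if a + b = p + 1 then eps else 0)"
    if "a \<in> {1..p}" "b \<in> {1..p}" for a b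
    using FV_lemma[OF sp sa Up ad that, of 0] unfolding kform0 V_def by simp
  have VH: "V i \<in> H" if "i \<in> {1..p}" for i
    unfolding Hd using that by (intro vec.span_base imageI)
  have ti: "inj_on V {1..p} \<and> vec.independent (V ` {1..p})"
  proof (rule test_indep[OF bB], simp, intro ballI)
    fix i assume i: "i \<in> {1..p}"
    have c: "p + 1 - i \<in> {1..p}" using i by auto
    show "\<exists>w. B (V i) w \<noteq> 0 \<and> (\<forall>j\<in>{1..p}. j \<noteq> i \<longrightarrow> B (V j) w = 0)"
    proof (intro exI conjI ballI impI)
      show "B (V i) (V (p + 1 - i)) \<noteq> 0" using BV[OF i c] i e0 by auto
      fix j assume j: "j \<in> {1..p}" "j \<noteq> i"
      show "B (V j) (V (p + 1 - i)) = 0" using BV[OF j(1) c] i j by auto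
    qed
  qed
  have dr': "diagonal_rep F H D" using dr unfolding F_def H_def .
  note df = diag_facts[OF dr']
  have cD: "card D = p"
  proof -
    have "card D = vec.dim D" using vec.dim_eq_card_independent[OF df(1)] by simp
    also have "\<dots> = vec.dim (vec.span D)" by simp
    also have "\<dots> = vec.dim (vec.span (V ` {1..p}))" using df(3) Hd by simp
    also have "\<dots> = vec.dim (V ` {1..p})" by simp
    also have "\<dots> = card (V ` {1..p})" using vec.dim_eq_card_independent ti by blast
    also have "\<dots> = p" using ti card_image by fastforce
    finally show ?thesis .
  qed
  show "card D = p" by (rule cD)
  have lo: "k \<le> card {d\<in>D. F d d = 0}"
  proof -
    have sub: "{1..k} \<subseteq> {1..p}" using kp by auto
    have iA: "vec.independent (V ` {1..k})"
      using ti sub vec.independent_mono image_mono by metis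
    have AH: "V ` {1..k} \<subseteq> H" using VH sub by auto
    have rad: "\<forall>a\<in>V ` {1..k}. \<forall>w\<in>H. F a w = 0"
    proof (intro ballI)
      fix a w assume a: "a \<in> V ` {1..k}" and "w \<in> H"
      then obtain i where i: "i \<in> {1..k}" "a = V i" by auto
      have "i \<le> p" using i kp by auto
      then have "(shiftop T lam ^^ k) a = 0"
        using Upow_cycle[OF sa Up, of i k] i unfolding V_def by simp
      then show "F a w = 0" unfolding F_def kform_def using bil_zero[OF bB] by simp
    qed
    have "card (V ` {1..k}) = k"
      using card_image[OF inj_on_subset[OF conjunct1[OF ti] sub]] by simp
    then show ?thesis using zero_lower[OF bF dr' iA AH rad] by simp
  qed
  have up: "(p - k) + card {d\<in>D. F d d = 0} \<le> p"
  proof -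
    have tst: "\<forall>i\<in>{k+1..p}. \<exists>w\<in>H. F (V i) w \<noteq> 0 \<and> (\<forall>j\<in>{k+1..p}. j \<noteq> i \<longrightarrow> F (V j) w = 0)"
    proof (intro ballI)
      fix i assume i: "i \<in> {k+1..p}"
      have i1: "i \<in> {1..p}" using i by auto
      have c: "p + k + 1 - i \<in> {1..p}" using i by auto
      show "\<exists>w\<in>H. F (V i) w \<noteq> 0 \<and> (\<forall>j\<in>{k+1..p}. j \<noteq> i \<longrightarrow> F (V j) w = 0)"
      proof (intro bexI conjI ballI impI)
        show "F (V i) (V (p + k + 1 - i)) \<noteq> 0" using FV[OF i1 c] i e0 by auto
        fix j assume j: "j \<in> {k+1..p}" "j \<noteq> i"
        have j1: "j \<in> {1..p}" using j by auto
        show "F (V j) (V (p + k + 1 - i)) = 0" using FV[OF j1 c] i j by auto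
      next
        show "V (p + k + 1 - i) \<in> H" by (rule VH[OF c])
      qed
    qed
    have eH: "\<forall>i\<in>{k+1..p}. V i \<in> H" using VH by auto
    show ?thesis using zero_upper[OF bF dr' _ eH tst] cD by simp
  qed
  show "card {d\<in>D. kform B T lam k d d = 0} = k"
    using lo up kp unfolding F_def by linarith
qed


lemma diag_neg: "diagonal_rep F H D \<Longrightarrow> diagonal_rep (\<lambda>a b. - F a b) H D"
  unfolding diagonal_rep_def by simp

lemma real_neg:
  fixes B :: "real^'n \<Rightarrow> real^'n \<Rightarrow> real"
  assumes sp: "is_scalar_product B" and sa: "self_adjoint B T"
    and Up: "(shiftop T lam ^^ p) x = 0" and eps: "eps \<in> {1, -1}"
    and ad: "cycle_adapted B T lam x p eps" and kp: "k < p"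
    and dr: "diagonal_rep (kform B T lam k) (cycle_span T lam x p) D"
  shows "neg_entries (kform B T lam k) D =
           (if eps = -1 then (p - k + 1) div 2 else (p - k) - (p - k + 1) div 2)"
proof -
  have e0: "eps \<noteq> 0" using eps by auto
  note cs = cyc_setup[OF sp sa Up e0 ad kp dr]
  define V where "V = cycle_vec T lam x p"
  define F where "F = kform B T lam k"
  define H where "H = cycle_span T lam x p"
  define P where "P = p + k + 1"
  have Hd: "H = vec.span (V ` {1..p})" unfolding H_def V_def cycle_span_def ..
  have bF: "bil F" unfolding F_def by (rule bil_kform[OF sp sa])
  have FV: "F (V a) (V b) = (if a + b = P then eps else 0)"
    if "a \<in> {1..p}" "b \<in> {1..p}" for a b
    unfolding F_def V_def P_def by (rule FV_lemma[OF sp sa Up ad that])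
  have VH: "V i \<in> H" if "i \<in> {1..p}" for i
    unfolding Hd using that by (intro vec.span_base imageI)
  have dr': "diagonal_rep F H D" using dr unfolding F_def H_def .
  note df = diag_facts[OF dr']
  define sf where "sf i = (if 2 * i = P then V i else V i + V (P - i))" for i
  define dff where "dff i = V i - V (P - i)" for i
  define I1 where "I1 = {i. k < i \<and> 2 * i \<le> P}"
  define I2 where "I2 = {i. k < i \<and> 2 * i < P}"
  have I1e: "I1 = {Suc k .. P div 2}" unfolding I1_def by auto
  have I2e: "I2 = {Suc k .. (P - 1) div 2}" unfolding I2_def P_def by auto
  have fI1: "finite I1" and fI2: "finite I2" using I1e I2e by auto
  have cI: "card I1 + card I2 = p - k" unfolding I1e I2e P_def using kp by simp
  have rng: "i \<in> {1..p}" "P - i \<in> {1..p}" "i + (P - i) = P" if "i \<in> I1" for i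
    using that kp unfolding I1_def P_def by auto
  have I21: "I2 \<subseteq> I1" unfolding I1_def I2_def by auto
  have sfH: "\<forall>i\<in>I1. sf i \<in> H"
    unfolding sf_def using VH rng by (auto intro: vec.span_add simp: Hd)
  have dfH: "\<forall>i\<in>I2. dff i \<in> H"
    unfolding dff_def using VH rng I21 by (auto intro!: vec.span_diff simp: Hd)
  have Fs: "F (sf i) (sf j) = (if i = j then (if 2 * i = P then eps else eps + eps) else 0)"
    if i: "i \<in> I1" and j: "j \<in> I1" for i j
  proof -
    note ri = rng[OF i] and rj = rng[OF j]
    have ci: "2 * i \<le> P" "k < i" using i unfolding I1_def by auto
    have cj: "2 * j \<le> P" "k < j" using j unfolding I1_def by auto
    have q1: "(i + j = P) = (i = j \<and> 2 * i = P)" using ci cj by arith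
    have q2: "(i + (P - j) = P) = (i = j)" using ci cj by arith
    have q3: "((P - i) + j = P) = (i = j)" using ci cj by arith
    have q4: "((P - i) + (P - j) = P) = (i = j \<and> 2 * i = P)" using ci cj by arith
    have t1: "F (V i) (V j) = (if i = j \<and> 2 * i = P then eps else 0)"
      using FV[OF ri(1) rj(1)] unfolding q1 .
    have t2: "F (V i) (V (P - j)) = (if i = j then eps else 0)"
      using FV[OF ri(1) rj(2)] unfolding q2 .
    have t3: "F (V (P - i)) (V j) = (if i = j then eps else 0)"
      using FV[OF ri(2) rj(1)] unfolding q3 .
    have t4: "F (V (P - i)) (V (P - j)) = (if i = j \<and> 2 * i = P then eps else 0)"
      using FV[OF ri(2) rj(2)] unfolding q4 .
    show ?thesis
    proof (cases "i = j")
      case True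
      then show ?thesis unfolding sf_def
        using t1 t2 t3 t4 by (cases "2 * i = P") (simp_all add: bil_add[OF bF] bil_add2[OF bF])
    next
      case False
      then show ?thesis unfolding sf_def
        using t1 t2 t3 t4 by (simp add: bil_add[OF bF] bil_add2[OF bF])
    qed
  qed
  have Fd: "F (dff i) (dff j) = (if i = j then - (eps + eps) else 0)"
    if i: "i \<in> I2" and j: "j \<in> I2" for i j
  proof -
    note ri = rng[OF subsetD[OF I21 i]] and rj = rng[OF subsetD[OF I21 j]]
    have ci: "2 * i < P" "k < i" using i unfolding I2_def by auto
    have cj: "2 * j < P" "k < j" using j unfolding I2_def by auto
    show ?thesis
      unfolding dff_def
      using ri rj ci cj
      by (auto simp: bil_diff[OF bF] bil_diff2[OF bF] FV)
  qed
  have bF': "bil (\<lambda>a b. - F a b)" by (rule bil_neg[OF bF])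
  have dr'': "diagonal_rep (\<lambda>a b. - F a b) H D" by (rule diag_neg[OF dr'])
  have posset: "{d\<in>D. - F d d < 0} = {d\<in>D. F d d > 0}" by auto
  define N where "N = card {d\<in>D. F d d < 0}"
  define Q where "Q = card {d\<in>D. F d d > 0}"
  define Z where "Z = card {d\<in>D. F d d = 0}"
  have Zk: "Z = k" using cs(2) unfolding Z_def F_def .
  have part: "N + Q + Z = p"
  proof -
    let ?A1 = "{d\<in>D. F d d < 0}" and ?A2 = "{d\<in>D. F d d > 0}" and ?A3 = "{d\<in>D. F d d = 0}"
    have f1: "finite ?A1" by (rule finite_subset[OF _ df(2)]) auto
    have f2: "finite ?A2" by (rule finite_subset[OF _ df(2)]) auto
    have f3: "finite ?A3" by (rule finite_subset[OF _ df(2)]) auto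
    have u23: "card (?A2 \<union> ?A3) = card ?A2 + card ?A3"
      by (rule card_Un_disjoint[OF f2 f3]) auto
    have u123: "card (?A1 \<union> (?A2 \<union> ?A3)) = card ?A1 + card (?A2 \<union> ?A3)"
      by (rule card_Un_disjoint[OF f1]) (use f2 f3 in auto)
    have "D = ?A1 \<union> (?A2 \<union> ?A3)" by auto
    then have "card D = card ?A1 + card ?A2 + card ?A3" using u23 u123 by simp
    then show ?thesis using cs(1) unfolding N_def Q_def Z_def by simp
  qed
  have bounds: "(if eps = -1 then card I1 else card I2) \<le> N \<and> (if eps = -1 then card I2 else card I1) \<le> Q"
  proof (cases "eps = -1")
    case True
    have n1: "card I1 \<le> N" unfolding N_def
    proof (rule neg_bound[OF bF dr' fI1 sfH])
      show "\<forall>i\<in>I1. \<forall>j\<in>I1. i \<noteq> j \<longrightarrow> F (sf i) (sf j) = 0" using Fs by auto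
      show "\<forall>i\<in>I1. F (sf i) (sf i) < 0" using Fs True by auto
    qed
    have q2: "card I2 \<le> Q" unfolding Q_def posset[symmetric]
    proof (rule neg_bound[OF bF' dr'' fI2 dfH])
      show "\<forall>i\<in>I2. \<forall>j\<in>I2. i \<noteq> j \<longrightarrow> - F (dff i) (dff j) = 0" using Fd by auto
      show "\<forall>i\<in>I2. - F (dff i) (dff i) < 0" using Fd True by auto
    qed
    show ?thesis using n1 q2 True by simp
  next
    case False
    then have e1: "eps = 1" using eps by auto
    have n2: "card I2 \<le> N" unfolding N_def
    proof (rule neg_bound[OF bF dr' fI2 dfH])
      show "\<forall>i\<in>I2. \<forall>j\<in>I2. i \<noteq> j \<longrightarrow> F (dff i) (dff j) = 0" using Fd by auto
      show "\<forall>i\<in>I2. F (dff i) (dff i) < 0" using Fd e1 by auto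
    qed
    have q1: "card I1 \<le> Q" unfolding Q_def posset[symmetric]
    proof (rule neg_bound[OF bF' dr'' fI1 sfH])
      show "\<forall>i\<in>I1. \<forall>j\<in>I1. i \<noteq> j \<longrightarrow> - F (sf i) (sf j) = 0" using Fs by auto
      show "\<forall>i\<in>I1. - F (sf i) (sf i) < 0" using Fs e1 by auto
    qed
    show ?thesis using n2 q1 False by simp
  qed
  have c1: "card I1 = (p - k + 1) div 2" unfolding I1e P_def using kp by simp
  have "neg_entries (kform B T lam k) D = N" unfolding neg_entries_def N_def F_def ..
  moreover have "N = (if eps = -1 then (p - k + 1) div 2 else (p - k) - (p - k + 1) div 2)"
  proof (cases "eps = -1")
    case True
    then have "card I1 \<le> N" "card I2 \<le> Q" using bounds by auto
    then have "N = card I1" using part Zk cI kp by linarith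
    then show ?thesis using True c1 by simp
  next
    case False
    then have b2: "card I2 \<le> N" "card I1 \<le> Q" using bounds by auto
    obtain m where m: "m = p - k" "m + k = p" using kp by auto
    have "N = m - card I1" using b2 part Zk cI m by linarith
    then show ?thesis using False c1 m by simp
  qed
  ultimately show ?thesis by simp
qed


theorem mainTheorem7:
  shows
  "(\<forall>(B :: real^'n \<Rightarrow> real^'n \<Rightarrow> real) T lam x p eps.
      is_scalar_product B \<and> self_adjoint B T \<and> is_eigenvalue T lam \<and>
      generates_cycle T lam x p \<and> eps \<in> {1, -1} \<and> cycle_adapted B T lam x p eps \<longrightarrow>
      (\<forall>k<p. \<forall>D. diagonal_rep (kform B T lam k) (cycle_span T lam x p) D \<longrightarrow>
         zero_entries (kform B T lam k) D = k \<and>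
         neg_entries (kform B T lam k) D =
           (if eps = -1 then (p - k + 1) div 2 else (p - k) - (p - k + 1) div 2)))
   \<and>
   (\<forall>(B :: complex^'m \<Rightarrow> complex^'m \<Rightarrow> complex) T lam x p eps.
      is_scalar_product B \<and> self_adjoint B T \<and> is_eigenvalue T lam \<and>
      generates_cycle T lam x p \<and> eps \<in> {1, -1} \<and> (lam \<notin> \<real> \<longrightarrow> eps = 1) \<and>
      cycle_adapted B T lam x p eps \<longrightarrow>
      (\<forall>k<p. \<forall>D. diagonal_rep (kform B T lam k) (cycle_span T lam x p) D \<longrightarrow>
         zero_entries (kform B T lam k) D = k))"
proof (intro conjI allI impI)
  fix B :: "real^'n \<Rightarrow> real^'n \<Rightarrow> real" and T lam x p eps k D
  assume h: "is_scalar_product B \<and> self_adjoint B T \<and> is_eigenvalue T lam \<and>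
      generates_cycle T lam x p \<and> eps \<in> {1, -1} \<and> cycle_adapted B T lam x p eps"
    and kp: "k < p" and dr: "diagonal_rep (kform B T lam k) (cycle_span T lam x p) D"
  have Up: "(shiftop T lam ^^ p) x = 0" using h unfolding generates_cycle_def by blast
  have e0: "eps \<noteq> 0" using h by auto
  show "zero_entries (kform B T lam k) D = k"
    unfolding zero_entries_def using cyc_setup(2)[OF _ _ Up e0 _ kp dr] h by blast
  show "neg_entries (kform B T lam k) D =
           (if eps = -1 then (p - k + 1) div 2 else (p - k) - (p - k + 1) div 2)"
    using real_neg[OF _ _ Up _ _ kp dr] h by blast
next
  fix B :: "complex^'m \<Rightarrow> complex^'m \<Rightarrow> complex" and T lam x p eps k D
  assume h: "is_scalar_product B \<and> self_adjoint B T \<and> is_eigenvalue T lam \<and>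
      generates_cycle T lam x p \<and> eps \<in> {1, -1} \<and> (lam \<notin> \<real> \<longrightarrow> eps = 1) \<and>
      cycle_adapted B T lam x p eps"
    and kp: "k < p" and dr: "diagonal_rep (kform B T lam k) (cycle_span T lam x p) D"
  have Up: "(shiftop T lam ^^ p) x = 0" using h unfolding generates_cycle_def by blast
  have e0: "eps \<noteq> 0" using h by auto
  show "zero_entries (kform B T lam k) D = k"
    unfolding zero_entries_def using cyc_setup(2)[OF _ _ Up e0 _ kp dr] h by blast
qed

end
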